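(* Let $H$ and $L$ be Hilbert spaces, let $T:H\to L$ be a linear operator, and let $\mathcal{A}\subset H$ be nonempty. Suppose $T$ is bi-Lipschitz from $\mathcal{A}$ to $L$ with constants $\alpha,\beta>0$, i.e. $\alpha\|f_1-f_2\|^2\le\|T(f_1-f_2)\|^2\le\beta\|f_1-f_2\|^2$ for all $f_1,f_2\in\mathcal{A}$. Let $f\in H$, $e\in L$ and $g=Tf+e$. Let $\epsilon,\delta>0$. Let $f_{opt}^\epsilon\in\mathcal{A}$ be any element with $\|g-Tf_{opt}^\epsilon\|^2\le\inf_{h\in\mathcal{A}}\|g-Th\|^2+\epsilon$. Let $f_{\mathcal{A}}^\delta\in\mathcal{A}$ be any element with $\|f-f_{\mathcal{A}}^\delta\|^2\le\inf_{h\in\mathcal{A}}\|f-h\|^2+\delta$, and set $\tilde e=g-Tf_{\mathcal{A}}^\delta$. Then \[ \|f_{\mathcal{A}}^\delta-f_{opt}^\epsilon\|\le\frac{1}{\sqrt{\alpha}}\left[2\|\tilde e\|+\sqrt{\epsilon}\right]. \]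
   Context: The elements $f_{opt}^\epsilon$ ("$\epsilon$-optimal estimates") and $f_{\mathcal{A}}^\delta$ (a "$\delta$-projection" of $f$ onto $\mathcal{A}$) exist since $\mathcal{A}$ is nonempty and $\epsilon,\delta>0$. *)

theory Defs
  imports "HOL-Analysis.Analysis"
begin

end

theory Submission
  imports Defs
begin

theorem mainTheorem1:
  fixes T :: "'h::{real_inner,complete_space} \<Rightarrow> 'l::{real_inner,complete_space}"
    and A :: "'h set" and \<alpha> \<beta> \<epsilon> \<delta> :: real
    and f f_opt f_A :: 'h and e g :: 'l
  assumes "linear T"
    and "A \<noteq> {}"
    and "\<alpha> > 0" and "\<beta> > 0"
    and "\<And>f1 f2. f1 \<in> A \<Longrightarrow> f2 \<in> A \<Longrightarrow>
           \<alpha> * (norm (f1 - f2))\<^sup>2 \<le> (norm (T (f1 - f2)))\<^sup>2 \<and>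
           (norm (T (f1 - f2)))\<^sup>2 \<le> \<beta> * (norm (f1 - f2))\<^sup>2"
    and "g = T f + e"
    and "\<epsilon> > 0" and "\<delta> > 0"
    and "f_opt \<in> A"
    and "(norm (g - T f_opt))\<^sup>2 \<le> (INF h\<in>A. (norm (g - T h))\<^sup>2) + \<epsilon>"
    and "f_A \<in> A"
    and "(norm (f - f_A))\<^sup>2 \<le> (INF h\<in>A. (norm (f - h))\<^sup>2) + \<delta>"
  shows "norm (f_A - f_opt) \<le> (1 / sqrt \<alpha>) * (2 * norm (g - T f_A) + sqrt \<epsilon>)"
proof -
  let ?E = "norm (g - T f_A)"
  have bdd: "bdd_below ((\<lambda>h. (norm (g - T h))\<^sup>2) ` A)"
    by (rule bdd_belowI[where m=0]) auto
  have "(INF h\<in>A. (norm (g - T h))\<^sup>2) \<le> ?E\<^sup>2"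
    using cINF_lower[OF bdd assms(11)] .
  hence sq: "(norm (g - T f_opt))\<^sup>2 \<le> ?E\<^sup>2 + \<epsilon>" using assms(10) by linarith
  have "?E\<^sup>2 + \<epsilon> \<le> (?E + sqrt \<epsilon>)\<^sup>2"
    using assms(7) by (simp add: power2_eq_square algebra_simps)
  hence "(norm (g - T f_opt))\<^sup>2 \<le> (?E + sqrt \<epsilon>)\<^sup>2" using sq by linarith
  hence b1: "norm (g - T f_opt) \<le> ?E + sqrt \<epsilon>"
    by (rule power2_le_imp_le) (use assms(7) in simp)
  have "\<alpha> * (norm (f_A - f_opt))\<^sup>2 \<le> (norm (T (f_A - f_opt)))\<^sup>2"
    using assms(5)[OF assms(11) assms(9)] by blast
  hence "sqrt (\<alpha> * (norm (f_A - f_opt))\<^sup>2) \<le> norm (T (f_A - f_opt))"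
    using real_sqrt_le_mono by fastforce
  hence b2: "sqrt \<alpha> * norm (f_A - f_opt) \<le> norm (T (f_A - f_opt))"
    by (simp add: real_sqrt_mult)
  have "T (f_A - f_opt) = (g - T f_opt) - (g - T f_A)"
    using linear_diff[OF assms(1)] by simp
  hence "norm (T (f_A - f_opt)) \<le> norm (g - T f_opt) + ?E"
    using norm_triangle_ineq4 by metis
  hence "sqrt \<alpha> * norm (f_A - f_opt) \<le> 2 * ?E + sqrt \<epsilon>" using b1 b2 by linarith
  moreover have "sqrt \<alpha> > 0" using assms(3) by simp
  ultimately show ?thesis by (simp add: field_simps)
qed

end
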